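(* Consider formal expressions built from two variables $\pi_i,\pi_j$ and real constants using only the binary operators $+,-,\times,\div$ (with parentheses allowed freely), and let the operator count of an expression be the number of occurrences of these operators in it. Each expression defines a function $f(\pi_i,\pi_j)$ wherever it is defined. Say that $f$ is admissible if: (1) $f$ is defined on all of $\mathbb{R}^+\times\mathbb{R}^+$ (where $\mathbb{R}^+=(0,\infty)$) and takes values in $[0,1]$; (2) $f(\pi_i,\pi_j)=\tfrac12$ whenever $\pi_i=\pi_j$; (3) $\lim_{\pi_i\to 0} f(\pi_i,\pi_j)=0$ for each fixed $\pi_j$; (4) $\lim_{\pi_j\to 0} f(\pi_i,\pi_j)=1$ for each fixed $\pi_i$; (5) $\lim_{\pi_i\to \infty} f(\pi_i,\pi_j)=1$ for each fixed $\pi_j$; (6) $\lim_{\pi_j\to \infty} f(\pi_i,\pi_j)=0$ for each fixed $\pi_i$. Then no expression with operator count $0$ or $1$ defines an admissible function, and every expression with operator count exactly $2$ that defines an admissible function defines $f(\pi_i,\pi_j)=\dfrac{\pi_i}{\pi_i+\pi_j}$ (which is admissible). Thus $\pi_i/(\pi_i+\pi_j)$ is the unique admissible function of minimal operator count.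
   Context: Here $\pi_i,\pi_j>0$ are strength parameters of items $i$ and $j$, and $f(\pi_i,\pi_j)$ is intended as the probability that $i$ is preferred to $j$ in a pairwise comparison. Constants may appear in place of variables at no cost in the operator count; parentheses do not count as operators. *)

theory Defs
  imports Complex_Main
begin

datatype expr = VarI | VarJ | Const real
  | Add expr expr | Sub expr expr | Mul expr expr | Div expr expr

fun ops :: "expr \<Rightarrow> nat" where
  "ops VarI = 0"
| "ops VarJ = 0"
| "ops (Const c) = 0"
| "ops (Add a b) = Suc (ops a + ops b)"
| "ops (Sub a b) = Suc (ops a + ops b)"
| "ops (Mul a b) = Suc (ops a + ops b)"
| "ops (Div a b) = Suc (ops a + ops b)"

fun eval :: "expr \<Rightarrow> real \<Rightarrow> real \<Rightarrow> real option" where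
  "eval VarI x y = Some x"
| "eval VarJ x y = Some y"
| "eval (Const c) x y = Some c"
| "eval (Add a b) x y = (case (eval a x y, eval b x y) of
      (Some u, Some v) \<Rightarrow> Some (u + v) | _ \<Rightarrow> None)"
| "eval (Sub a b) x y = (case (eval a x y, eval b x y) of
      (Some u, Some v) \<Rightarrow> Some (u - v) | _ \<Rightarrow> None)"
| "eval (Mul a b) x y = (case (eval a x y, eval b x y) of
      (Some u, Some v) \<Rightarrow> Some (u * v) | _ \<Rightarrow> None)"
| "eval (Div a b) x y = (case (eval a x y, eval b x y) of
      (Some u, Some v) \<Rightarrow> (if v = 0 then None else Some (u / v)) | _ \<Rightarrow> None)"

definition admissible :: "(real \<Rightarrow> real \<Rightarrow> real) \<Rightarrow> bool" where
  "admissible f \<longleftrightarrow>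
     (\<forall>x>0. \<forall>y>0. 0 \<le> f x y \<and> f x y \<le> 1) \<and>
     (\<forall>x>0. f x x = 1/2) \<and>
     (\<forall>y>0. ((\<lambda>x. f x y) \<longlongrightarrow> 0) (at_right 0)) \<and>
     (\<forall>x>0. ((\<lambda>y. f x y) \<longlongrightarrow> 1) (at_right 0)) \<and>
     (\<forall>y>0. ((\<lambda>x. f x y) \<longlongrightarrow> 1) at_top) \<and>
     (\<forall>x>0. ((\<lambda>y. f x y) \<longlongrightarrow> 0) at_top)"

definition admissible_expr :: "expr \<Rightarrow> bool" where
  "admissible_expr e \<longleftrightarrow>
     (\<forall>x>0. \<forall>y>0. eval e x y \<noteq> None) \<and> admissible (\<lambda>x y. the (eval e x y))"

end

theory Submission
  imports Defs "HOL-Real_Asymp.Real_Asymp"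
begin


lemma at_right_pt:
  fixes f :: "real \<Rightarrow> real"
  assumes "((\<lambda>x. f x) \<longlongrightarrow> (l::real)) (at_right 0)" "l < a"
  shows "\<exists>x. 0 < x \<and> x < 1 \<and> f x < (a::real)"
proof -
  have "eventually (\<lambda>x. f x < a) (at_right 0)" using assms order_tendstoD(2) by blast
  moreover have "eventually (\<lambda>x. x < (1::real)) (at_right 0)"
    unfolding eventually_at_right_field by (intro exI[of _ 1]) auto
  ultimately have "eventually (\<lambda>x. f x < a \<and> x < 1) (at_right (0::real))"
    by (rule eventually_conj)
  then obtain b where "b > 0" "\<forall>y>0. y < b \<longrightarrow> f y < a \<and> y < 1"
    unfolding eventually_at_right_field by auto
  then show ?thesis by (metis dense)
qed

lemma facts:
  assumes "admissible_expr e"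
  shows "eval e 1 1 = Some (1/2)" "eval e 2 2 = Some (1/2)" "eval e 3 3 = Some (1/2)"
    "\<exists>v. eval e 4 1 = Some v \<and> 0 \<le> v \<and> v \<le> 1"
    "\<exists>v. eval e 1 4 = Some v \<and> 0 \<le> v \<and> v \<le> 1"
    "\<exists>x v. 0 < x \<and> x < 1 \<and> eval e x 1 = Some v \<and> v < 1/4"
proof -
  have def: "\<And>x y. x > 0 \<Longrightarrow> y > 0 \<Longrightarrow> eval e x y = Some (the (eval e x y))"
    using assms unfolding admissible_expr_def by auto
  have A: "admissible (\<lambda>x y. the (eval e x y))" using assms unfolding admissible_expr_def by auto
  show "eval e 1 1 = Some (1/2)" "eval e 2 2 = Some (1/2)" "eval e 3 3 = Some (1/2)"
    using A def[of 1 1] def[of 2 2] def[of 3 3] unfolding admissible_def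
    by (metis zero_less_numeral zero_less_one)+
  show "\<exists>v. eval e 4 1 = Some v \<and> 0 \<le> v \<and> v \<le> 1"
    using A def[of 4 1] unfolding admissible_def by force
  show "\<exists>v. eval e 1 4 = Some v \<and> 0 \<le> v \<and> v \<le> 1"
    using A def[of 1 4] unfolding admissible_def by force
  have "((\<lambda>x. the (eval e x 1)) \<longlongrightarrow> 0) (at_right 0)" using A unfolding admissible_def by auto
  from at_right_pt[OF this, of "1/4"] obtain x where "0 < x" "x < 1" "the (eval e x 1) < 1/4" by auto
  then show "\<exists>x v. 0 < x \<and> x < 1 \<and> eval e x 1 = Some v \<and> v < 1/4"
    using def[of x 1] by auto
qed

lemma leaf_cases: "ops e = 0 \<Longrightarrow> (e = VarI \<Longrightarrow> P) \<Longrightarrow> (e = VarJ \<Longrightarrow> P) \<Longrightarrow> (\<And>c. e = Const c \<Longrightarrow> P) \<Longrightarrow> P"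
  by (cases e) auto

lemma bin_cases: "ops e = Suc n \<Longrightarrow>
  (\<And>a b. ops a + ops b = n \<Longrightarrow> e = Add a b \<Longrightarrow> P) \<Longrightarrow>
  (\<And>a b. ops a + ops b = n \<Longrightarrow> e = Sub a b \<Longrightarrow> P) \<Longrightarrow>
  (\<And>a b. ops a + ops b = n \<Longrightarrow> e = Mul a b \<Longrightarrow> P) \<Longrightarrow>
  (\<And>a b. ops a + ops b = n \<Longrightarrow> e = Div a b \<Longrightarrow> P) \<Longrightarrow> P"
  by (cases e) auto

lemma zero: "ops e = 0 \<Longrightarrow> \<not> admissible_expr e"
  apply (erule leaf_cases)
  using facts(1) facts(6) by force+

lemma one: assumes "admissible_expr e" "ops e = 1" shows False
proof -
  note F = facts[OF assms(1)]
  from assms(2) have "ops e = Suc 0" by simp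
  then show False
    apply (rule bin_cases)
    apply (auto elim!: leaf_cases)
    using F by (auto split: if_splits)
qed
lemma sum1_cases: "ops a + ops b = Suc 0 \<Longrightarrow> (ops a = 0 \<Longrightarrow> ops b = Suc 0 \<Longrightarrow> P) \<Longrightarrow> (ops a = Suc 0 \<Longrightarrow> ops b = 0 \<Longrightarrow> P) \<Longrightarrow> P"
  by linarith

lemma sum0: "ops a + ops b = 0 \<Longrightarrow> (ops a = 0 \<Longrightarrow> ops b = 0 \<Longrightarrow> P) \<Longrightarrow> P"
  by simp

lemma two: assumes "admissible_expr e" "ops e = 2" "x > 0" "y > 0" shows "eval e x y = Some (x/(x+y))"
proof -
  note F = facts[OF assms(1)]
  from assms(2) have o: "ops e = Suc (Suc 0)" by simp
  show ?thesis
    apply (insert F assms(3,4))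
    apply (rule bin_cases[OF o]; erule sum1_cases; erule bin_cases; erule sum0; elim leaf_cases; 
          (simp split: if_splits)?;
          ((elim exE conjE)?, rule FalseE, (linarith | (subgoal_tac "ca = 0", simp, linarith) | (subgoal_tac "c = 0", simp, ((simp add: algebra_simps)?; linarith)) | (subgoal_tac "inverse ca = 0", simp, ((simp only: divide_inverse)?; linarith))))?)
    done
qed


lemma ev_pos: "eventually (\<lambda>x::real. x > 0) (at_right 0)"
  unfolding eventually_at_right_field by (intro exI[of _ 1]) auto

lemma adm: "admissible_expr (Div VarI (Add VarI VarJ))"
proof -
  have E: "\<And>x y. x > 0 \<Longrightarrow> y > 0 \<Longrightarrow> eval (Div VarI (Add VarI VarJ)) x y = Some (x/(x+y))"
    by simp
  have T: "\<And>x y. x > 0 \<Longrightarrow> y > 0 \<Longrightarrow> the (eval (Div VarI (Add VarI VarJ)) x y) = x/(x+y)"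
    using E by simp
  show ?thesis unfolding admissible_expr_def admissible_def
  proof (intro conjI allI impI)
    fix x y :: real assume "x > 0" "y > 0"
    then show "eval (Div VarI (Add VarI VarJ)) x y \<noteq> None" by simp
  next
    fix x y :: real assume "x > 0" "y > 0"
    then show "0 \<le> the (eval (Div VarI (Add VarI VarJ)) x y)" "the (eval (Div VarI (Add VarI VarJ)) x y) \<le> 1"
      by (simp_all add: T)
  next
    fix x :: real assume "x > 0"
    then show "the (eval (Div VarI (Add VarI VarJ)) x x) = 1/2" by simp
  next
    fix y :: real assume y: "y > 0"
    have "((\<lambda>x. x/(x+y)) \<longlongrightarrow> 0/(0+y)) (at_right 0)"
      using y by (intro tendsto_intros) auto
    then have "((\<lambda>x. x/(x+y)) \<longlongrightarrow> 0) (at_right 0)" by simp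
    moreover have "eventually (\<lambda>x. x/(x+y) = the (eval (Div VarI (Add VarI VarJ)) x y)) (at_right 0)"
      using ev_pos by eventually_elim (metis T y)
    ultimately show "((\<lambda>x. the (eval (Div VarI (Add VarI VarJ)) x y)) \<longlongrightarrow> 0) (at_right 0)"
      by (rule Lim_transform_eventually)
  next
    fix x :: real assume x: "x > 0"
    have "((\<lambda>y. x/(x+y)) \<longlongrightarrow> x/(x+0)) (at_right 0)"
      using x by (intro tendsto_intros) auto
    then have "((\<lambda>y. x/(x+y)) \<longlongrightarrow> 1) (at_right 0)" using x by simp
    moreover have "eventually (\<lambda>y. x/(x+y) = the (eval (Div VarI (Add VarI VarJ)) x y)) (at_right 0)"
      using ev_pos by eventually_elim (metis T x)
    ultimately show "((\<lambda>y. the (eval (Div VarI (Add VarI VarJ)) x y)) \<longlongrightarrow> 1) (at_right 0)"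
      by (rule Lim_transform_eventually)
  next
    fix y :: real assume y: "y > 0"
    have "((\<lambda>x. x/(x+y)) \<longlongrightarrow> 1) at_top"
      using y by real_asymp
    moreover have "eventually (\<lambda>x. x/(x+y) = the (eval (Div VarI (Add VarI VarJ)) x y)) at_top"
      using eventually_gt_at_top[of 0] by eventually_elim (metis T y)
    ultimately show "((\<lambda>x. the (eval (Div VarI (Add VarI VarJ)) x y)) \<longlongrightarrow> 1) at_top"
      by (rule Lim_transform_eventually)
  next
    fix x :: real assume x: "x > 0"
    have "((\<lambda>y. x/(x+y)) \<longlongrightarrow> 0) at_top"
      using x by real_asymp
    moreover have "eventually (\<lambda>y. x/(x+y) = the (eval (Div VarI (Add VarI VarJ)) x y)) at_top"
      using eventually_gt_at_top[of 0] by eventually_elim (metis T x)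
    ultimately show "((\<lambda>y. the (eval (Div VarI (Add VarI VarJ)) x y)) \<longlongrightarrow> 0) at_top"
      by (rule Lim_transform_eventually)
  qed
qed

theorem mainTheorem1:
  shows "(\<forall>e. ops e \<le> 1 \<longrightarrow> \<not> admissible_expr e)
    \<and> (\<forall>e. ops e = 2 \<and> admissible_expr e \<longrightarrow>
          (\<forall>x>0. \<forall>y>0. eval e x y = Some (x / (x + y))))
    \<and> admissible_expr (Div VarI (Add VarI VarJ))"
proof (intro conjI allI impI)
  fix e assume "ops e \<le> 1"
  then have "ops e = 0 \<or> ops e = 1" by linarith
  then show "\<not> admissible_expr e" using zero one by blast
next
  fix e :: expr and x y :: real
  assume "ops e = 2 \<and> admissible_expr e" "x > 0" "y > 0"
  then show "eval e x y = Some (x / (x + y))" using two by blast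
next
  show "admissible_expr (Div VarI (Add VarI VarJ))" by (rule adm)
qed

end
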